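(* Let $N\ge 1$. For each instance $i\in\{1,\dots,N\}$ let $r_i\in\{0,1\}$ be a binary label and $y_i\in\mathbb{R}$ a current prediction, and put $\psi_i=\frac{e^{y_i}}{e^{y_i}+e^{-y_i}}$. Let the logistic loss be $\ell(y_i)=-r_i\ln\psi_i-(1-r_i)\ln(1-\psi_i)$, with first and second derivatives $g_i=\ell'(y_i)=2(\psi_i-r_i)$ and $h_i=\ell''(y_i)=4\psi_i(1-\psi_i)>0$. Let $p_i\in(0,1]$ and $q_i\in\{0,1\}$ for each $i$, and let $\mathbf{Q}=\mathrm{diag}\left(\frac{q_1}{p_1},\dots,\frac{q_N}{p_N}\right)$, $\mathbf{H}=\mathrm{diag}(h_1,\dots,h_N)$, $\mathbf{g}=(g_1,\dots,g_N)^\top$. Then, with $(\mathbf{H}\mathbf{Q})^{-1}$ understood as the inverse on the sampled coordinates $\{i: q_i=1\}$ (i.e. the Moore--Penrose pseudo-inverse of the diagonal matrix $\mathbf{H}\mathbf{Q}$), $$\mathbf{g}^\top\mathbf{Q}(\mathbf{H}\mathbf{Q})^{+}\mathbf{Q}\mathbf{g}=\sum_{i:\,q_i=1}\frac{\left(\frac{q_ig_i}{p_i}\right)^2}{\frac{q_ih_i}{p_i}}\;\ge\;\sum_{i=1}^N\frac{q_i}{p_i}\,\ell(y_i).$$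
   Context: This is the setting of gradient tree boosting with logistic loss (LogitBoost) combined with importance sampling: on each boosting iteration, instance $i$ is included in the subsample independently with probability $p_i$, and $q_i\in\{0,1\}$ is the indicator that it was sampled. The importance-balanced (reweighted) loss is $L(\mathbf{y})=\sum_i \frac{q_i}{p_i}\ell(y_i)$. *)

theory Defs
  imports "HOL-Analysis.Analysis"
begin

definition psi :: "real \<Rightarrow> real" where
  "psi y = exp y / (exp y + exp (- y))"

definition logloss :: "real \<Rightarrow> real \<Rightarrow> real" where
  "logloss r y = - r * ln (psi y) - (1 - r) * ln (1 - psi y)"

definition grad :: "real \<Rightarrow> real \<Rightarrow> real" where
  "grad r y = 2 * (psi y - r)"

definition hess :: "real \<Rightarrow> real" where
  "hess y = 4 * psi y * (1 - psi y)"

definition diag_mat :: "real^'n \<Rightarrow> real^'n^'n" where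
  "diag_mat d = (\<chi> i j. if i = j then d $ i else 0)"

definition diag_pinv :: "real^'n^'n \<Rightarrow> real^'n^'n" where
  "diag_pinv A = (\<chi> i j. if i = j \<and> A $ i $ i \<noteq> 0 then inverse (A $ i $ i) else 0)"

end

theory Submission
  imports Defs
begin

lemma psi_pos: "0 < psi y" unfolding psi_def by (simp add: add_pos_pos)
lemma psi_lt1: "psi y < 1" unfolding psi_def by (simp add: add_pos_pos)
lemma hess_pos: "0 < hess y" unfolding hess_def using psi_pos[of y] psi_lt1[of y] by simp

lemma diag_mult_vec: "diag_mat d *v v = (\<chi> i. d $ i * v $ i)"
proof -
  have "\<And>i. (\<Sum>j\<in>UNIV. (if i = j then d $ i else 0) * v $ j) = d $ i * v $ i"
    by (simp add: if_distrib[of "\<lambda>x. x * _"] cong: if_cong)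
  thus ?thesis unfolding diag_mat_def matrix_vector_mult_def by (simp add: vec_eq_iff)
qed

lemma diag_mult_mat: "diag_mat d ** diag_mat e = diag_mat (\<chi> i. d $ i * e $ i)"
proof -
  have "\<And>i j. (\<Sum>k\<in>UNIV. (if i = k then d $ i else 0) * (if k = j then e $ k else 0))
     = (if i = j then d $ i * e $ i else 0)"
    by (simp add: if_distrib[of "\<lambda>x. x * _"] cong: if_cong)
  thus ?thesis unfolding diag_mat_def matrix_matrix_mult_def by (simp add: vec_eq_iff)
qed

lemma ln_bound: "0 < (t::real) \<Longrightarrow> t < 1 \<Longrightarrow> - ln t \<le> (1 - t) / t"
proof -
  assume a: "0 < t" "t < 1"
  have "ln (1/t) \<le> 1/t - 1" using ln_le_minus_one[of "1/t"] a by simp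
  thus ?thesis using a by (simp add: ln_div field_simps)
qed

lemma key:
  assumes "rr \<in> {0,1}"
  shows "logloss rr yy \<le> (grad rr yy)\<^sup>2 / hess yy"
proof -
  have p0: "0 < psi yy" and p1: "psi yy < 1" by (rule psi_pos, rule psi_lt1)
  show ?thesis
  proof (cases "rr = 1")
    case True
    have "(grad rr yy)\<^sup>2 / hess yy = (1 - psi yy) / psi yy"
      using True p0 p1 unfolding grad_def hess_def by (simp add: power2_eq_square field_simps)
    moreover have "logloss rr yy = - ln (psi yy)" using True unfolding logloss_def by simp
    ultimately show ?thesis using ln_bound[OF p0 p1] by simp
  next
    case False
    hence r0: "rr = 0" using assms by auto
    have q0: "0 < 1 - psi yy" "1 - psi yy < 1" using p0 p1 by auto
    have "(grad rr yy)\<^sup>2 / hess yy = (1 - (1 - psi yy)) / (1 - psi yy)"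
      using r0 p0 p1 unfolding grad_def hess_def by (simp add: power2_eq_square field_simps)
    moreover have "logloss rr yy = - ln (1 - psi yy)" using r0 unfolding logloss_def by simp
    ultimately show ?thesis using ln_bound[OF q0] by simp
  qed
qed

theorem lemma3:
  fixes r y p q :: "real^'n"
  assumes "\<forall>i. r $ i \<in> {0, 1}"
    and "\<forall>i. 0 < p $ i \<and> p $ i \<le> 1"
    and "\<forall>i. q $ i \<in> {0, 1}"
  defines "g \<equiv> (\<chi> i. grad (r $ i) (y $ i))"
    and "h \<equiv> (\<chi> i. hess (y $ i))"
    and "Q \<equiv> diag_mat (\<chi> i. q $ i / p $ i)"
    and "H \<equiv> diag_mat (\<chi> i. hess (y $ i))"
  shows "g \<bullet> (Q *v (diag_pinv (H ** Q) *v (Q *v g)))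
           = (\<Sum>i\<in>{i. q $ i = 1}. (q $ i * g $ i / p $ i)\<^sup>2 / (q $ i * h $ i / p $ i))
       \<and> (\<Sum>i\<in>{i. q $ i = 1}. (q $ i * g $ i / p $ i)\<^sup>2 / (q $ i * h $ i / p $ i))
           \<ge> (\<Sum>i\<in>UNIV. q $ i / p $ i * logloss (r $ i) (y $ i))"
proof -
  let ?f = "\<lambda>i. (q $ i * g $ i / p $ i)\<^sup>2 / (q $ i * h $ i / p $ i)"
  define d where "d = (\<chi> i. if q $ i = 1 then p $ i / hess (y $ i) else 0)"
  have HQ: "diag_pinv (H ** Q) = diag_mat d"
    unfolding H_def Q_def diag_mult_mat
    unfolding diag_pinv_def diag_mat_def d_def
    using assms(2,3) hess_pos
    by (auto simp: vec_eq_iff)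
  have "g \<bullet> (Q *v (diag_pinv (H ** Q) *v (Q *v g))) = (\<Sum>i\<in>UNIV. if q $ i = 1 then ?f i else 0)"
  proof -
    have pt: "g $ i * (q $ i / p $ i * (d $ i * (q $ i / p $ i * g $ i))) = (if q $ i = 1 then ?f i else 0)" for i
    proof -
      have hp: "0 < h $ i" "0 < p $ i" using hess_pos assms(2) unfolding h_def by auto
      show ?thesis using hp unfolding d_def h_def by (auto simp: power2_eq_square field_simps)
    qed
    show ?thesis unfolding HQ unfolding Q_def diag_mult_vec inner_vec_def inner_real_def
      by (simp only: vec_lambda_beta pt)
  qed
  also have "\<dots> = sum ?f {i. q $ i = 1}" by (simp add: sum.If_cases)
  finally have E: "g \<bullet> (Q *v (diag_pinv (H ** Q) *v (Q *v g))) = sum ?f {i. q $ i = 1}" .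
  have "(\<Sum>i\<in>UNIV. q $ i / p $ i * logloss (r $ i) (y $ i)) \<le> (\<Sum>i\<in>UNIV. if q $ i = 1 then ?f i else 0)"
  proof (rule sum_mono)
    fix i
    have hp: "0 < h $ i" "0 < p $ i" using hess_pos assms(2) unfolding h_def by auto
    have k: "logloss (r $ i) (y $ i) \<le> (g $ i)\<^sup>2 / h $ i"
      using key[of "r $ i" "y $ i"] assms(1) unfolding g_def h_def by auto
    show "q $ i / p $ i * logloss (r $ i) (y $ i) \<le> (if q $ i = 1 then ?f i else 0)"
    proof (cases "q $ i = 1")
      case True
      have "?f i = (g $ i)\<^sup>2 / h $ i / p $ i" using True hp by (simp add: power2_eq_square field_simps)
      moreover have "logloss (r $ i) (y $ i) / p $ i \<le> (g $ i)\<^sup>2 / h $ i / p $ i"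
        using divide_right_mono[OF k, of "p $ i"] hp by simp
      ultimately show ?thesis using True by simp
    next
      case False hence "q $ i = 0" using assms(3) by auto
      thus ?thesis by simp
    qed
  qed
  also have "\<dots> = sum ?f {i. q $ i = 1}" by (simp add: sum.If_cases)
  finally show ?thesis using E by simp
qed

end
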